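(* Let $n\ge 3$ and let $C_n$ be the cycle on $n$ vertices. There exist pairs of vertices $\{a,b\}$ and $\{c,d\}$ of $C_n$, at least one of which is an edge, such that there is perfect pair state transfer between $e_a-e_b$ and $e_c-e_d$ in $C_n$, if and only if $n=4$.
   Context: For a graph with Laplacian $L=\Delta-A$ ($\Delta$ degree matrix, $A$ adjacency matrix), $U(t)=\exp(itL)$. Perfect pair state transfer between $e_a-e_b$ and $e_c-e_d$ (for distinct pairs $\{a,b\}\neq\{c,d\}$ of distinct vertices) means there exist $t\ge0$ and $\gamma\in\mathbb{C}$ with $|\gamma|=1$ such that $U(t)(e_a-e_b)=\gamma(e_c-e_d)$, $e_v$ being the standard basis vector of $v$. *)

theory Defs
  imports Complex_Main
begin

text \<open>Graphs on vertex set {0..<n}; matrices are functions nat => nat => complex,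
  only entries with indices < n are meaningful.\<close>

definition cycle_adj :: "nat \<Rightarrow> nat \<Rightarrow> nat \<Rightarrow> bool" where
  "cycle_adj n i j \<longleftrightarrow> i < n \<and> j < n \<and> i \<noteq> j \<and> (j = (i + 1) mod n \<or> i = (j + 1) mod n)"

definition cycle_laplacian :: "nat \<Rightarrow> nat \<Rightarrow> nat \<Rightarrow> complex" where
  "cycle_laplacian n i j =
     (if i = j then of_nat (card {k. k < n \<and> cycle_adj n i k}) else 0)
     - (if cycle_adj n i j then 1 else 0)"

definition mat_mult :: "nat \<Rightarrow> (nat \<Rightarrow> nat \<Rightarrow> complex) \<Rightarrow> (nat \<Rightarrow> nat \<Rightarrow> complex) \<Rightarrow> nat \<Rightarrow> nat \<Rightarrow> complex" where
  "mat_mult n A B i j = (\<Sum>k<n. A i k * B k j)"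

fun mat_pow :: "nat \<Rightarrow> (nat \<Rightarrow> nat \<Rightarrow> complex) \<Rightarrow> nat \<Rightarrow> nat \<Rightarrow> nat \<Rightarrow> complex" where
  "mat_pow n A 0 = (\<lambda>i j. if i = j then 1 else 0)"
| "mat_pow n A (Suc k) = mat_mult n A (mat_pow n A k)"

definition mat_exp :: "nat \<Rightarrow> (nat \<Rightarrow> nat \<Rightarrow> complex) \<Rightarrow> nat \<Rightarrow> nat \<Rightarrow> complex" where
  "mat_exp n A i j = (\<Sum>k. mat_pow n A k i j / of_nat (fact k))"

definition mat_vec :: "nat \<Rightarrow> (nat \<Rightarrow> nat \<Rightarrow> complex) \<Rightarrow> (nat \<Rightarrow> complex) \<Rightarrow> nat \<Rightarrow> complex" where
  "mat_vec n A x i = (\<Sum>j<n. A i j * x j)"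

definition cycle_U :: "nat \<Rightarrow> real \<Rightarrow> nat \<Rightarrow> nat \<Rightarrow> complex" where
  "cycle_U n t = mat_exp n (\<lambda>i j. \<i> * of_real t * cycle_laplacian n i j)"

definition std_basis :: "nat \<Rightarrow> nat \<Rightarrow> complex" where
  "std_basis v = (\<lambda>i. if i = v then 1 else 0)"

definition pair_pst :: "nat \<Rightarrow> nat \<Rightarrow> nat \<Rightarrow> nat \<Rightarrow> nat \<Rightarrow> bool" where
  "pair_pst n a b c d \<longleftrightarrow>
     (\<exists>t::real. \<exists>\<gamma>::complex. t \<ge> 0 \<and> norm \<gamma> = 1 \<and>
        (\<forall>i<n. mat_vec n (cycle_U n t) (\<lambda>v. std_basis a v - std_basis b v) i
               = \<gamma> * (std_basis c i - std_basis d i)))"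

end

theory Submission
  imports Defs
begin


lemma mat_pow_bound:
  assumes B: "\<And>i j. norm (A i j) \<le> B" and B0: "B \<ge> 0"
  shows "norm (mat_pow n A k i j) \<le> (real n * B) ^ k"
proof (induction k arbitrary: i j)
  case 0 then show ?case by simp
next
  case (Suc k)
  have "norm (mat_pow n A (Suc k) i j) = norm (\<Sum>l<n. A i l * mat_pow n A k l j)"
    by (simp add: mat_mult_def)
  also have "\<dots> \<le> (\<Sum>l<n. norm (A i l * mat_pow n A k l j))" by (rule norm_sum)
  also have "\<dots> \<le> (\<Sum>l<n. B * (real n * B) ^ k)"
    by (intro sum_mono) (simp add: norm_mult mult_mono B Suc B0)
  also have "\<dots> = (real n * B) ^ Suc k" by simp
  finally show ?case .
qed

lemma mat_pow_summable:
  assumes B: "\<And>i j. norm (A i j) \<le> B" and B0: "B \<ge> 0"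
  shows "summable (\<lambda>k. mat_pow n A k i j / of_nat (fact k))"
proof (rule summable_comparison_test)
  show "summable (\<lambda>k. inverse (fact k) * (real n * B) ^ k)" by (rule summable_exp)
  show "\<exists>N. \<forall>k\<ge>N. norm (mat_pow n A k i j / of_nat (fact k)) \<le> inverse (fact k) * (real n * B) ^ k"
  proof (intro exI allI impI)
    fix k :: nat
    have "norm (mat_pow n A k i j) \<le> (real n * B) ^ k" by (rule mat_pow_bound[OF B B0])
    then show "norm (mat_pow n A k i j / of_nat (fact k)) \<le> inverse (fact k) * (real n * B) ^ k"
      by (simp add: norm_divide divide_inverse mult.commute mult_left_mono norm_mult norm_inverse)
  qed
qed

lemma mat_vec_pow_0: "i < n \<Longrightarrow> mat_vec n (mat_pow n A 0) x i = x i"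
proof -
  assume i: "i < n"
  have "mat_vec n (mat_pow n A 0) x i = (\<Sum>j<n. (if i = j then x j else 0))"
    unfolding mat_vec_def by (intro sum.cong) auto
  also have "\<dots> = x i" using i by simp
  finally show ?thesis .
qed

lemma mat_vec_pow_Suc:
  "mat_vec n (mat_pow n A (Suc k)) x = mat_vec n A (mat_vec n (mat_pow n A k) x)"
  by (auto simp: mat_vec_def mat_mult_def sum_distrib_left sum_distrib_right mult.assoc intro!: ext sum.swap)

lemma mat_vec_exp:
  assumes B: "\<And>i j. norm (A i j) \<le> B" and B0: "B \<ge> 0"
  shows "mat_vec n (mat_exp n A) x i = (\<Sum>k. mat_vec n (mat_pow n A k) x i / of_nat (fact k))"
proof -
  have "mat_vec n (mat_exp n A) x i = (\<Sum>j<n. (\<Sum>k. mat_pow n A k i j / of_nat (fact k) * x j))"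
    unfolding mat_vec_def mat_exp_def
    by (intro sum.cong refl suminf_mult2 mat_pow_summable[OF B B0])
  also have "\<dots> = (\<Sum>k. (\<Sum>j<n. mat_pow n A k i j / of_nat (fact k) * x j))"
    by (rule suminf_sum[symmetric]) (intro summable_mult2 mat_pow_summable[OF B B0])
  also have "\<dots> = (\<Sum>k. mat_vec n (mat_pow n A k) x i / of_nat (fact k))"
    by (simp add: mat_vec_def sum_divide_distrib)
  finally show ?thesis .
qed

lemma mat_vec_pow_summable:
  assumes B: "\<And>i j. norm (A i j) \<le> B" and B0: "B \<ge> 0"
  shows "summable (\<lambda>k. mat_vec n (mat_pow n A k) x i / of_nat (fact k))"
proof -
  have "summable (\<lambda>k. (\<Sum>j<n. mat_pow n A k i j / of_nat (fact k) * x j))"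
    by (intro summable_sum summable_mult2 mat_pow_summable[OF B B0])
  then show ?thesis by (simp add: mat_vec_def sum_divide_distrib)
qed

lemma exp_series_eq: "(\<Sum>k. \<mu> ^ k / fact k) = exp (\<mu>::complex)"
  using exp_converges[of \<mu>] by (simp add: sums_iff scaleR_conv_of_real divide_inverse mult.commute)

lemma exp_series_summable: "summable (\<lambda>k. (\<mu>::complex) ^ k / fact k)"
  using summable_exp[of \<mu>] by (simp add: divide_inverse mult.commute)

lemma functional_eigen:
  assumes B: "\<And>i j. norm (A i j) \<le> B" and B0: "B \<ge> 0"
    and ev: "\<And>y. (\<Sum>i<n. c i * mat_vec n A y i) = \<mu> * (\<Sum>i<n. c i * y i)"
  shows "(\<Sum>i<n. c i * mat_vec n (mat_exp n A) x i) = exp \<mu> * (\<Sum>i<n. c i * x i)"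
proof -
  have pw: "(\<Sum>i<n. c i * mat_vec n (mat_pow n A k) x i) = \<mu> ^ k * (\<Sum>i<n. c i * x i)" for k
  proof (induction k)
    case 0 then show ?case using mat_vec_pow_0[of _ n A x, simplified] by simp
  next
    case (Suc k) then show ?case by (simp only: mat_vec_pow_Suc ev) simp
  qed
  have "(\<Sum>i<n. c i * mat_vec n (mat_exp n A) x i)
     = (\<Sum>i<n. (\<Sum>k. c i * (mat_vec n (mat_pow n A k) x i / of_nat (fact k))))"
    by (rule sum.cong[OF refl]) (simp only: mat_vec_exp[OF B B0] suminf_mult[OF mat_vec_pow_summable[OF B B0]])
  also have "\<dots> = (\<Sum>k. (\<Sum>i<n. c i * (mat_vec n (mat_pow n A k) x i / of_nat (fact k))))"
    by (rule suminf_sum[symmetric]) (intro summable_mult mat_vec_pow_summable[OF B B0])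
  also have "\<dots> = (\<Sum>k. \<mu> ^ k / of_nat (fact k) * (\<Sum>i<n. c i * x i))"
  proof (rule arg_cong[where f=suminf], rule ext)
    fix k
    have "(\<Sum>i<n. c i * (mat_vec n (mat_pow n A k) x i / of_nat (fact k)))
        = (\<Sum>i<n. c i * mat_vec n (mat_pow n A k) x i) / of_nat (fact k)"
      by (simp add: sum_divide_distrib)
    then show "(\<Sum>i<n. c i * (mat_vec n (mat_pow n A k) x i / of_nat (fact k))) = \<mu> ^ k / of_nat (fact k) * (\<Sum>i<n. c i * x i)"
      by (simp add: pw)
  qed
  also have "\<dots> = exp \<mu> * (\<Sum>i<n. c i * x i)"
    by (subst suminf_mult2[symmetric]) (auto simp: exp_series_eq exp_series_summable)
  finally show ?thesis .
qed

lemma vector_eigen: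
  assumes B: "\<And>i j. norm (A i j) \<le> B" and B0: "B \<ge> 0"
    and ev: "\<And>i. i < n \<Longrightarrow> mat_vec n A x i = \<mu> * x i" and i: "i < n"
  shows "mat_vec n (mat_exp n A) x i = exp \<mu> * x i"
proof -
  have pw: "\<forall>i<n. mat_vec n (mat_pow n A k) x i = \<mu> ^ k * x i" for k
  proof (induction k)
    case 0 then show ?case using mat_vec_pow_0[of _ n A x, simplified] by simp
  next
    case (Suc k)
    show ?case
    proof (intro allI impI)
      fix i assume i: "i < n"
      have "mat_vec n (mat_pow n A (Suc k)) x i = (\<Sum>j<n. A i j * (\<mu> ^ k * x j))"
        using Suc by (simp only: mat_vec_pow_Suc) (simp add: mat_vec_def)
      also have "\<dots> = \<mu> ^ k * mat_vec n A x i"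
        by (simp add: mat_vec_def sum_distrib_left mult.left_commute)
      finally show "mat_vec n (mat_pow n A (Suc k)) x i = \<mu> ^ Suc k * x i" using ev[OF i] by simp
    qed
  qed
  have "mat_vec n (mat_exp n A) x i = (\<Sum>k. \<mu> ^ k / of_nat (fact k) * x i)"
    using i by (simp add: mat_vec_exp[OF B B0] pw)
  also have "\<dots> = exp \<mu> * x i"
    by (subst suminf_mult2[symmetric]) (auto simp: exp_series_eq exp_series_summable)
  finally show ?thesis .
qed



definition nx :: "nat \<Rightarrow> nat \<Rightarrow> nat" where "nx n i = (if Suc i = n then 0 else Suc i)"
definition pv :: "nat \<Rightarrow> nat \<Rightarrow> nat" where "pv n i = (if i = 0 then n - 1 else i - 1)"

lemma mod_suc_nx: "i < n \<Longrightarrow> Suc i mod n = nx n i"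
  by (auto simp: nx_def)

lemma nx_lt: "i < n \<Longrightarrow> nx n i < n" by (auto simp: nx_def)
lemma pv_lt: "i < n \<Longrightarrow> pv n i < n" by (auto simp: pv_def)

lemma adj_iff:
  assumes n: "3 \<le> n" and i: "i < n"
  shows "cycle_adj n i j \<longleftrightarrow> (j = nx n i \<or> j = pv n i)"
proof
  assume "cycle_adj n i j"
  then have j: "j < n" and "j = nx n i \<or> i = nx n j"
    using i by (auto simp: cycle_adj_def mod_suc_nx)
  then show "j = nx n i \<or> j = pv n i" using i by (auto simp: nx_def pv_def split: if_splits)
next
  assume "j = nx n i \<or> j = pv n i"
  then show "cycle_adj n i j" using i n
    by (auto simp: cycle_adj_def mod_suc_nx nx_lt pv_lt) (auto simp: nx_def pv_def split: if_splits)
qed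

lemma adj_irrefl: "\<not> cycle_adj n i i" by (simp add: cycle_adj_def)

lemma nx_ne_pv: "3 \<le> n \<Longrightarrow> i < n \<Longrightarrow> nx n i \<noteq> pv n i"
  by (auto simp: nx_def pv_def)

lemma adj_set: "3 \<le> n \<Longrightarrow> i < n \<Longrightarrow> {k. k < n \<and> cycle_adj n i k} = {nx n i, pv n i}"
  using adj_iff nx_lt pv_lt by auto

lemma lap_vec:
  assumes n: "3 \<le> n" and i: "i < n"
  shows "mat_vec n (cycle_laplacian n) x i = 2 * x i - x (nx n i) - x (pv n i)"
proof -
  have card: "card {k. k < n \<and> cycle_adj n i k} = 2"
    using adj_set[OF n i] nx_ne_pv[OF n i] by simp
  have "mat_vec n (cycle_laplacian n) x i
      = (\<Sum>j<n. (if i = j then 2 * x j else 0)) - (\<Sum>j<n. (if cycle_adj n i j then x j else 0))"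
  proof -
    have pw: "\<And>j. cycle_laplacian n i j * x j = (if i = j then 2 * x j else 0) - (if cycle_adj n i j then x j else 0)"
      using adj_irrefl[of n i] by (auto simp: cycle_laplacian_def card)
    have "mat_vec n (cycle_laplacian n) x i = (\<Sum>j<n. (if i = j then 2 * x j else 0) - (if cycle_adj n i j then x j else 0))"
      unfolding mat_vec_def by (intro sum.cong refl pw)
    then show ?thesis by (simp only: sum_subtractf)
  qed
  also have "(\<Sum>j<n. (if i = j then 2 * x j else 0)) = 2 * x i" using i by simp
  also have "(\<Sum>j<n. (if cycle_adj n i j then x j else 0)) = (\<Sum>j\<in>{k. k < n \<and> cycle_adj n i k}. x j)"
    by (simp add: sum.inter_filter[symmetric] lessThan_def Collect_conj_eq[symmetric])
  also have "\<dots> = x (nx n i) + x (pv n i)"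
    using adj_set[OF n i] nx_ne_pv[OF n i] by simp
  finally show ?thesis by simp
qed

lemma lap_sym: "cycle_laplacian n i j = cycle_laplacian n j i"
  by (auto simp: cycle_laplacian_def cycle_adj_def)

lemma lap_bound: "norm (cycle_laplacian n i j) \<le> real n + 1"
proof -
  have c: "card {k. k < n \<and> cycle_adj n i k} \<le> n"
    by (rule order.trans[OF card_mono[of "{..<n}"]]) auto
  have "norm (cycle_laplacian n i j) \<le> norm (of_nat (card {k. k < n \<and> cycle_adj n i k}) :: complex) + 1"
    unfolding cycle_laplacian_def
    by (rule order.trans[OF norm_triangle_ineq4]) auto
  also have "\<dots> \<le> real n + 1" using c by simp
  finally show ?thesis .
qed

definition Amat :: "nat \<Rightarrow> real \<Rightarrow> nat \<Rightarrow> nat \<Rightarrow> complex" where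
  "Amat n t = (\<lambda>i j. \<i> * of_real t * cycle_laplacian n i j)"

lemma Amat_bound: "norm (Amat n t i j) \<le> \<bar>t\<bar> * (real n + 1)"
  unfolding Amat_def by (simp add: norm_mult mult_left_mono lap_bound)

lemma cycle_U_Amat: "cycle_U n t = mat_exp n (Amat n t)"
  by (simp add: cycle_U_def Amat_def)

lemma mat_vec_Amat: "mat_vec n (Amat n t) x i = \<i> * of_real t * mat_vec n (cycle_laplacian n) x i"
  by (simp add: mat_vec_def Amat_def sum_distrib_left mult.assoc)

definition th :: "nat \<Rightarrow> nat \<Rightarrow> real" where "th n k = 2 - 2 * cos (2 * pi * real k / real n)"

lemma chi_eigen:
  fixes k :: nat
  assumes n: "3 \<le> n" and l: "l < n"
  defines "z \<equiv> cis (2 * pi * real k / real n)"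
  shows "mat_vec n (cycle_laplacian n) (\<lambda>j. z ^ j) l = of_real (th n k) * z ^ l"
proof -
  have zn: "z ^ n = 1" using n by (simp add: z_def DeMoivre)
  have nz: "norm z = 1" by (simp add: z_def)
  have zc: "z * cnj z = 1" using nz by (simp add: complex_norm_square[symmetric])
  have a: "z ^ nx n l = z ^ l * z"
    using zn l by (auto simp: nx_def mult.commute)
  have b0: "z ^ pv n l * z = z ^ l"
  proof (cases "l = 0")
    case True then show ?thesis using zn n by (simp add: pv_def power_Suc2[symmetric])
  next
    case False then show ?thesis by (simp add: pv_def power_Suc2[symmetric])
  qed
  have b: "z ^ pv n l = z ^ l * cnj z"
  proof -
    have "z ^ pv n l = z ^ pv n l * (z * cnj z)" using zc by simp
    also have "\<dots> = z ^ l * cnj z" using b0 by (simp add: mult.assoc[symmetric])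
    finally show ?thesis .
  qed
  have re: "z + cnj z = of_real (2 * cos (2 * pi * real k / real n))"
    by (simp add: z_def complex_eq_iff)
  have "mat_vec n (cycle_laplacian n) (\<lambda>j. z ^ j) l = z ^ l * (2 - (z + cnj z))"
    using lap_vec[OF n l, of "\<lambda>j. z ^ j"] a b by (simp add: algebra_simps)
  also have "\<dots> = of_real (th n k) * z ^ l" by (simp add: re th_def)
  finally show ?thesis .
qed

lemma functional_A:
  fixes k :: nat
  assumes n: "3 \<le> n"
  defines "z \<equiv> cis (2 * pi * real k / real n)"
  shows "(\<Sum>l<n. z ^ l * mat_vec n (Amat n t) y l) = (\<i> * of_real (t * th n k)) * (\<Sum>l<n. z ^ l * y l)"
proof -
  have s1: "(\<Sum>l<n. z ^ l * mat_vec n (Amat n t) y l) = \<i> * of_real t * (\<Sum>l<n. \<Sum>j<n. z ^ l * cycle_laplacian n l j * y j)"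
    by (simp only: mat_vec_Amat) (simp add: mat_vec_def sum_distrib_left mult_ac)
  have s2: "(\<Sum>l<n. \<Sum>j<n. z ^ l * cycle_laplacian n l j * y j) = (\<Sum>j<n. \<Sum>l<n. y j * (cycle_laplacian n j l * z ^ l))"
    by (subst sum.swap) (intro sum.cong refl, metis lap_sym mult.commute mult.left_commute)
  have s3: "\<dots> = (\<Sum>j<n. y j * mat_vec n (cycle_laplacian n) (\<lambda>l. z ^ l) j)"
    by (simp add: mat_vec_def sum_distrib_left)
  have s4: "\<dots> = (\<Sum>j<n. y j * (of_real (th n k) * z ^ j))"
    by (intro sum.cong refl) (simp add: chi_eigen[OF n] z_def)
  have s5: "\<dots> = of_real (th n k) * (\<Sum>l<n. z ^ l * y l)"
    by (simp add: sum_distrib_left mult_ac)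
  show ?thesis using s1 s2 s3 s4 s5 by (simp add: mult_ac)
qed

lemma U_functional:
  fixes k :: nat
  assumes n: "3 \<le> n"
  defines "z \<equiv> cis (2 * pi * real k / real n)"
  shows "(\<Sum>l<n. z ^ l * mat_vec n (cycle_U n t) y l) = cis (t * th n k) * (\<Sum>l<n. z ^ l * y l)"
  unfolding cycle_U_Amat cis_conv_exp
  by (rule functional_eigen[OF Amat_bound]) (auto simp: functional_A[OF n] z_def)



lemma cis_eq_sign:
  assumes "cis x = (-1) ^ k"
  shows "\<exists>s::int. x = pi * of_int s \<and> even (s - int k)"
proof -
  have ck: "cis (real k * pi) = (-1) ^ k" by (simp add: DeMoivre[symmetric])
  have "cis (x - real k * pi) = 1"
    using assms ck by (simp add: cis_divide[symmetric])
  then have "cos (x - real k * pi) = 1" by (simp add: complex_eq_iff)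
  then obtain j :: int where "x - real k * pi = of_int j * 2 * pi" by (auto simp: cos_one_2pi_int)
  then have "x = pi * of_int (int k + 2 * j)" by (simp add: algebra_simps)
  then show ?thesis by (intro exI[of _ "int k + 2 * j"]) simp
qed

definition yy :: "nat \<Rightarrow> nat \<Rightarrow> real" where "yy n k = 2 * cos (2 * pi * real k / real n)"

lemma yy_rec: "yy n (Suc (Suc k)) = yy n 1 * yy n (Suc k) - yy n k"
proof -
  define a where "a = 2 * pi / real n"
  have e: "\<And>j. 2 * pi * real j / real n = real j * a" by (simp add: a_def)
  have "cos (real (Suc (Suc k)) * a) + cos (real k * a) = 2 * cos a * cos (real (Suc k) * a)"
    using cos_add[of "real (Suc k) * a" a] cos_diff[of "real (Suc k) * a" a]
    by (simp add: algebra_simps)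
  then show ?thesis unfolding yy_def e by (simp add: algebra_simps)
qed

lemma th_yy: "th n k = 2 - yy n k" by (simp add: th_def yy_def)

lemma niven_step:
  fixes P Q :: int
  assumes y1: "yy n 1 = of_int P / of_int Q" and Q: "Q > 0"
  shows "(\<exists>i::int. of_int Q ^ Suc k * yy n (Suc k) = of_int (P ^ Suc k + Q * i)) \<and>
         (\<exists>i::int. of_int Q ^ Suc (Suc k) * yy n (Suc (Suc k)) = of_int (P ^ Suc (Suc k) + Q * i))"
proof (induction k)
  case 0
  have a: "of_int Q * yy n 1 = of_int P" using y1 Q by simp
  have "of_int Q ^ 2 * yy n 2 = of_int Q ^ 2 * (yy n 1 * yy n 1 - 2)"
    using yy_rec[of n 0] by (simp add: yy_def numeral_2_eq_2)
  also have "\<dots> = (of_int Q * yy n 1) ^ 2 - 2 * of_int Q ^ 2" by (simp add: algebra_simps power2_eq_square)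
  also have "\<dots> = of_int (P ^ 2 + Q * (- 2 * Q))" using a by (simp add: power2_eq_square)
  finally have b: "of_int Q ^ 2 * yy n 2 = of_int (P ^ 2 + Q * (- 2 * Q))" .
  show ?case
  proof (intro conjI)
    show "\<exists>i::int. of_int Q ^ Suc 0 * yy n (Suc 0) = of_int (P ^ Suc 0 + Q * i)"
      using a by (intro exI[of _ 0]) simp
    show "\<exists>i::int. of_int Q ^ Suc (Suc 0) * yy n (Suc (Suc 0)) = of_int (P ^ Suc (Suc 0) + Q * i)"
      using b by (intro exI[of _ "- 2 * Q"]) (simp add: numeral_2_eq_2)
  qed
next
  case (Suc k)
  then obtain i j where i: "of_int Q ^ Suc k * yy n (Suc k) = of_int (P ^ Suc k + Q * i)"
    and j: "of_int Q ^ Suc (Suc k) * yy n (Suc (Suc k)) = of_int (P ^ Suc (Suc k) + Q * j)" by blast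
  have a: "of_int Q * yy n 1 = of_int P" using y1 Q by simp
  have "of_int Q ^ Suc (Suc (Suc k)) * yy n (Suc (Suc (Suc k)))
      = (of_int Q * yy n 1) * (of_int Q ^ Suc (Suc k) * yy n (Suc (Suc k))) - of_int Q ^ 2 * (of_int Q ^ Suc k * yy n (Suc k))"
    unfolding yy_rec[of n "Suc k"] by (simp add: algebra_simps power2_eq_square)
  also have "\<dots> = of_int (P ^ Suc (Suc (Suc k)) + Q * (P * j - Q * P ^ Suc k - Q * Q * i))"
    unfolding a i j by (simp add: algebra_simps power2_eq_square)
  finally show ?case using j by blast
qed

lemma yy_n: "n > 0 \<Longrightarrow> yy n n = 2" by (simp add: yy_def)

lemma niven_int:
  assumes n: "n > 0" and r: "yy n 1 \<in> \<rat>"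
  shows "yy n 1 \<in> \<int>"
proof -
  obtain P Q :: int where Q: "Q > 0" and cop: "coprime P Q" and y1: "yy n 1 = of_int P / of_int Q"
    using Rats_cases'[OF r] by metis
  obtain k where nk: "n = Suc k" using n by (cases n) auto
  obtain i :: int where "of_int Q ^ n * yy n n = of_int (P ^ n + Q * i)"
    using niven_step[OF y1 Q, of k] nk by blast
  then have "of_int (2 * Q ^ n) = (of_int (P ^ n + Q * i) :: real)" using yy_n[OF n] by simp
  then have "2 * Q ^ n = P ^ n + Q * i" by (simp only: of_int_eq_iff)
  then have "P ^ n = Q * (2 * Q ^ k - i)" using nk by (simp add: algebra_simps)
  then have "Q dvd P ^ n" by simp
  moreover have "coprime (P ^ n) Q" using cop by simp
  ultimately have "is_unit Q" by (metis coprime_absorb_right)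
  then have "Q = 1" using Q by simp
  then show ?thesis using y1 by simp
qed

lemma nt:
  assumes ev: "even n" and n6: "6 \<le> n"
    and h: "\<And>k. 1 \<le> k \<Longrightarrow> k < n \<Longrightarrow> cis (t * th n k) = g * (-1) ^ k"
  shows False
proof -
  obtain m where nm: "n = 2 * m" using ev by blast
  have m3: "m \<ge> 3" using n6 nm by simp
  have pim: "2 * pi * real 1 / real n = pi / real m" using nm by simp
  have thmB: "th n m = 4" using nm m3 by (simp add: th_def)
  have "2 * pi * real (m - 1) / real n = pi - pi / real m" using nm m3 by (simp add: field_simps of_nat_diff)
  then have thmA: "th n 1 + th n (m - 1) = 4" using pim unfolding th_def by (simp only:) (simp add: cos_diff)
  have "cis (t * th n 1) * cis (t * th n (m - 1)) = cis (t * th n m)"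
    by (simp add: cis_mult thmB thmA[symmetric] algebra_simps)
  then have e1: "(g * (-1) ^ 1) * (g * (-1) ^ (m - 1)) = g * (-1) ^ m"
    using h[of 1] h[of "m - 1"] h[of m] m3 nm by simp
  have e2: "(-1::complex) ^ m = - ((-1) ^ (m - 1))"
    using m3 by (cases m) auto
  define e :: complex where "e = (-1) ^ (m - 1)"
  have e0: "e \<noteq> 0" by (simp add: e_def)
  have "(g * g) * e = g * e" using e1 e2 unfolding e_def[symmetric] by (simp add: algebra_simps)
  then have gg: "g * g = g" using e0 by simp
  have "cis (t * th n 1) = g * (-1) ^ 1" using h[of 1] n6 by simp
  then have "norm g = 1" by (metis norm_cis norm_minus_cancel power_one_right mult_minus1_right)
  then have "g \<noteq> 0" by auto
  with gg have g1: "g = 1" by (metis mult_cancel_left2)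
  have "\<forall>k. \<exists>s::int. 1 \<le> k \<longrightarrow> k < n \<longrightarrow> t * th n k = pi * of_int s \<and> even (s - int k)"
    using h g1 cis_eq_sign by auto
  then obtain s :: "nat \<Rightarrow> int" where s: "\<And>k. 1 \<le> k \<Longrightarrow> k < n \<Longrightarrow> t * th n k = pi * of_int (s k) \<and> even (s k - int k)"
    by metis
  have key: "of_int (s 1) * yy n (Suc k) = of_int (s (Suc (Suc k)) - 2 * s (Suc k) + s k)"
    if "1 \<le> k" "Suc (Suc k) < n" for k
  proof -
    have "pi * of_int (s (Suc (Suc k)) - 2 * s (Suc k) + s k) = t * (th n (Suc (Suc k)) - 2 * th n (Suc k) + th n k)"
      using s[of k] s[of "Suc k"] s[of "Suc (Suc k)"] that by (simp add: algebra_simps)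
    also have "\<dots> = t * th n 1 * yy n (Suc k)"
      unfolding th_yy yy_rec[of n k] by (simp add: algebra_simps)
    also have "\<dots> = pi * (of_int (s 1) * yy n (Suc k))" using s[of 1] n6 by simp
    finally show ?thesis by simp
  qed
  have ym: "yy n (Suc m) = - yy n 1"
  proof -
    have "2 * pi * real (Suc m) / real n = pi / real m + pi" using nm m3 by (simp add: field_simps)
    then show ?thesis unfolding yy_def using pim by simp
  qed
  define N where "N = - (s (Suc (Suc m)) - 2 * s (Suc m) + s m)"
  have sN: "of_int (s 1) * yy n 1 = of_int N"
    using key[of m] m3 nm ym by (simp add: N_def)
  have "even (s (Suc (Suc m)) - int (Suc (Suc m)))" "even (s m - int m)"
    using s[of m] s[of "Suc (Suc m)"] m3 nm by auto
  then have evN: "even N" unfolding N_def by (simp add: algebra_simps)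
  have "odd (s 1)" using s[of 1] n6 by simp
  then have s10: "s 1 \<noteq> 0" by auto
  have "yy n 1 = of_int N / of_int (s 1)" using sN s10 by (simp add: field_simps)
  then have "yy n 1 \<in> \<rat>" by simp
  then have "yy n 1 \<in> \<int>" using niven_int n6 by simp
  then obtain P where P: "yy n 1 = of_int P" by (auto elim: Ints_cases)
  have "s 1 * P = N" using sN P by (metis of_int_eq_iff of_int_mult)
  then have evP: "even P" using evN \<open>odd (s 1)\<close> by auto
  have c1: "cos (pi / real m) \<ge> 1 / 2"
  proof -
    have "pi / real m \<le> pi / 3" using m3 by (intro divide_left_mono) auto
    then have "cos (pi / 3) \<le> cos (pi / real m)"
    proof (subst cos_mono_le_eq)
      have "pi / real m \<le> pi / 1" using m3 by (intro divide_left_mono) auto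
      then show "pi / real m \<le> pi" by simp
    qed (use \<open>pi / real m \<le> pi / 3\<close> in auto)
    then show ?thesis by (simp add: cos_60)
  qed
  have c2: "cos (pi / real m) < 1"
  proof (rule ccontr)
    assume "\<not> cos (pi / real m) < 1"
    then have "cos (pi / real m) = cos 0" using cos_le_one[of "pi / real m"] by simp
    moreover have "pi / real m \<le> pi / 1" using m3 by (intro divide_left_mono) auto
    ultimately have "pi / real m = 0" using cos_inj_pi[of "pi / real m" 0] by simp
    then show False using m3 by simp
  qed
  have "1 \<le> yy n 1" "yy n 1 < 2" using c1 c2 pim unfolding yy_def by auto
  then have "P = 1" using P by linarith
  then show False using evP by simp
qed



lemma unit_cnj: "norm (x::complex) = 1 \<Longrightarrow> x * cnj x = 1"
  by (simp add: complex_norm_square[symmetric])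

lemma unit_sum:
  fixes x y z u :: complex
  assumes nx: "norm x = 1" and ny: "norm y = 1" and nz: "norm z = 1" and nu: "norm u = 1"
    and s: "x + y = z + u"
  shows "(x = z \<and> y = u) \<or> (x = u \<and> y = z) \<or> (y = - x \<and> u = - z)"
proof (cases "x + y = 0")
  case True
  then show ?thesis using s by (auto simp: add_eq_0_iff)
next
  case False
  have cx: "x * cnj x = 1" "y * cnj y = 1" "z * cnj z = 1" "u * cnj u = 1"
    using unit_cnj nx ny nz nu by auto
  have a: "cnj (x + y) * (x * y) = x + y"
    using cx by (simp add: algebra_simps)
  have b: "cnj (z + u) * (z * u) = z + u"
    using cx by (simp add: algebra_simps)
  have "cnj (x + y) \<noteq> 0" using False complex_cnj_zero_iff by blast
  then have p: "x * y = z * u" using a b s by (metis mult_left_cancel)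
  have "(z - x) * (z - y) = z * z - z * (x + y) + x * y" by (simp add: algebra_simps)
  also have "\<dots> = 0" using s p by (simp add: algebra_simps)
  finally have "z = x \<or> z = y" by auto
  then show ?thesis using s by auto
qed

lemma root_pow: "cis (2 * pi / real n) ^ a = cis (2 * pi * real a / real n)"
  by (simp add: DeMoivre mult_ac)

lemma root_inj:
  assumes "n > 0" "a < n" "b < n" "cis (2 * pi / real n) ^ a = cis (2 * pi / real n) ^ b"
  shows "a = b"
  using bij_betw_roots_unity[OF assms(1)] assms(2-4) unfolding root_pow bij_betw_def inj_on_def by auto

lemma root_n: "n > 0 \<Longrightarrow> cis (2 * pi / real n) ^ n = 1"
  by (simp add: root_pow)

lemma root_mod: "n > 0 \<Longrightarrow> cis (2 * pi / real n) ^ (j mod n) = cis (2 * pi / real n) ^ j"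
proof -
  assume n: "n > 0"
  have "cis (2 * pi / real n) ^ j = cis (2 * pi / real n) ^ (n * (j div n) + j mod n)" by simp
  also have "\<dots> = cis (2 * pi / real n) ^ (j mod n)"
    by (simp only: power_add power_mult root_n[OF n]) simp
  finally show ?thesis by simp
qed

lemma pst_fourier:
  assumes n: "3 \<le> n" and abcd: "a < n" "b < n" "c < n" "d < n" and p: "pair_pst n a b c d"
  defines "\<zeta> \<equiv> cis (2 * pi / real n)"
  shows "\<exists>t \<gamma>. norm \<gamma> = 1 \<and> (\<forall>k. cis (t * th n k) * ((\<zeta> ^ a) ^ k - (\<zeta> ^ b) ^ k) = \<gamma> * ((\<zeta> ^ c) ^ k - (\<zeta> ^ d) ^ k))"
proof -
  obtain t \<gamma> where g: "norm \<gamma> = 1" and U: "\<forall>i<n. mat_vec n (cycle_U n t) (\<lambda>v. std_basis a v - std_basis b v) i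
               = \<gamma> * (std_basis c i - std_basis d i)"
    using p unfolding pair_pst_def by blast
  have sb: "(\<Sum>l<n. w ^ l * (std_basis x l - std_basis y l)) = w ^ x - w ^ y" if "x < n" "y < n" for w :: complex and x y
  proof -
    have "(\<Sum>l<n. w ^ l * (std_basis x l - std_basis y l)) = (\<Sum>l<n. (if l = x then w ^ x else 0) - (if l = y then w ^ y else 0))"
      by (intro sum.cong refl) (simp add: std_basis_def)
    also have "\<dots> = w ^ x - w ^ y" using that by (simp only: sum_subtractf) simp
    finally show ?thesis .
  qed
  have "cis (t * th n k) * ((\<zeta> ^ a) ^ k - (\<zeta> ^ b) ^ k) = \<gamma> * ((\<zeta> ^ c) ^ k - (\<zeta> ^ d) ^ k)" for k
  proof -
    define z where "z = cis (2 * pi * real k / real n)"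
    have zz: "(\<zeta> ^ x) ^ k = z ^ x" for x
      by (simp add: \<zeta>_def z_def root_pow DeMoivre mult_ac)
    have "cis (t * th n k) * (z ^ a - z ^ b) = (\<Sum>l<n. z ^ l * mat_vec n (cycle_U n t) (\<lambda>v. std_basis a v - std_basis b v) l)"
      using U_functional[OF n, of k t "\<lambda>v. std_basis a v - std_basis b v"] sb abcd by (simp add: z_def)
    also have "\<dots> = (\<Sum>l<n. z ^ l * (\<gamma> * (std_basis c l - std_basis d l)))"
      using U by simp
    also have "\<dots> = \<gamma> * (z ^ c - z ^ d)"
      using sb[of c d z] abcd by (simp add: sum_distrib_left[symmetric] mult_ac)
    finally show ?thesis by (simp add: zz)
  qed
  then show ?thesis using g by blast
qed



lemma pow_pred_cnj: "n > 0 \<Longrightarrow> X ^ n = 1 \<Longrightarrow> norm X = 1 \<Longrightarrow> X ^ (n - 1) = cnj (X::complex)"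
proof -
  assume n: "n > 0" and Xn: "X ^ n = 1" and nX: "norm X = 1"
  have "X ^ (n - 1) = X ^ (n - 1) * (X * cnj X)" using unit_cnj[OF nX] by simp
  also have "\<dots> = X ^ n * cnj X" using n by (simp add: mult.assoc[symmetric] power_Suc2[symmetric])
  finally show ?thesis using Xn by simp
qed

lemma th_pred: "n > 0 \<Longrightarrow> th n (n - 1) = th n 1"
proof -
  assume n: "n > 0"
  have "2 * pi * real (n - 1) / real n = 2 * pi - 2 * pi * real 1 / real n"
    using n by (simp add: field_simps of_nat_diff)
  then show ?thesis unfolding th_def by (simp only:) (simp add: cos_diff)
qed

lemma core:
  assumes n3: "3 \<le> n" and n4: "n \<noteq> 4" and abcd: "a < n" "b < n" "c < n" "d < n"
    and ab: "a \<noteq> b" and ne: "{a, b} \<noteq> {c, d}" and edge: "cycle_adj n a b \<or> cycle_adj n c d"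
    and g: "norm \<gamma> = 1"
    and F: "\<And>k. cis (t * th n k) * ((cis (2 * pi / real n) ^ a) ^ k - (cis (2 * pi / real n) ^ b) ^ k)
               = \<gamma> * ((cis (2 * pi / real n) ^ c) ^ k - (cis (2 * pi / real n) ^ d) ^ k)"
  shows False
proof -
  define \<zeta> where "\<zeta> = cis (2 * pi / real n)"
  define X where "X = \<zeta> ^ a"
  define Y where "Y = \<zeta> ^ b"
  define Z where "Z = \<zeta> ^ c"
  define W where "W = \<zeta> ^ d"
  have n0: "n > 0" using n3 by simp
  have F': "\<And>k. cis (t * th n k) * (X ^ k - Y ^ k) = \<gamma> * (Z ^ k - W ^ k)"
    using F unfolding X_def Y_def Z_def W_def \<zeta>_def .
  have zn: "\<zeta> ^ n = 1" using root_n[OF n0] by (simp add: \<zeta>_def)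
  have nz: "norm \<zeta> = 1" by (simp add: \<zeta>_def)
  have pows: "X ^ n = 1" "Y ^ n = 1" "Z ^ n = 1" "W ^ n = 1"
    unfolding X_def Y_def Z_def W_def by (simp_all add: power_mult[symmetric] mult.commute[of _ n] power_mult zn)
  have norms: "norm X = 1" "norm Y = 1" "norm Z = 1" "norm W = 1"
    unfolding X_def Y_def Z_def W_def by (simp_all add: norm_power nz)
  have inj: "\<And>x y. x < n \<Longrightarrow> y < n \<Longrightarrow> \<zeta> ^ x = \<zeta> ^ y \<Longrightarrow> x = y"
    using root_inj[OF n0] by (simp add: \<zeta>_def)
  have XY: "X \<noteq> Y" using inj[of a b] abcd ab by (auto simp: X_def Y_def)
  have not1: "\<not> (X = Z \<and> Y = W)"
  proof
    assume "X = Z \<and> Y = W"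
    then have "a = c" "b = d" using inj[of a c] inj[of b d] abcd unfolding X_def Y_def Z_def W_def by simp_all
    then show False using ne by simp
  qed
  have not2: "\<not> (X = W \<and> Y = Z)"
  proof
    assume "X = W \<and> Y = Z"
    then have "a = d" "b = c" using inj[of a d] inj[of b c] abcd unfolding X_def Y_def Z_def W_def by simp_all
    then show False using ne by auto
  qed
  define E where "E = cis (t * th n 1)"
  have F1: "E * (X - Y) = \<gamma> * (Z - W)" using F'[of 1] by (simp add: E_def)
  have Fn: "E * (cnj X - cnj Y) = \<gamma> * (cnj Z - cnj W)"
  proof -
    have "X ^ (n - 1) = cnj X" "Y ^ (n - 1) = cnj Y" "Z ^ (n - 1) = cnj Z" "W ^ (n - 1) = cnj W"
      using pow_pred_cnj[OF n0] pows norms by auto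
    moreover have "cis (t * th n (n - 1)) * (X ^ (n - 1) - Y ^ (n - 1)) = \<gamma> * (Z ^ (n - 1) - W ^ (n - 1))"
      by (rule F')
    ultimately show ?thesis unfolding th_pred[OF n0] E_def by simp
  qed
  have cF1: "cnj E * (cnj X - cnj Y) = cnj \<gamma> * (cnj Z - cnj W)"
    using arg_cong[OF F1, of cnj] by simp
  have Eu: "E * cnj E = 1" by (simp add: E_def unit_cnj)
  have gu: "\<gamma> * cnj \<gamma> = 1" using unit_cnj[OF g] .
  have D0: "cnj X - cnj Y \<noteq> 0" using XY by (metis complex_cnj_cancel_iff eq_iff_diff_eq_0)
  have "E * cnj \<gamma> * (cnj X - cnj Y) = cnj E * \<gamma> * (cnj X - cnj Y)"
  proof -
    have "cnj \<gamma> * (E * (cnj X - cnj Y)) = cnj \<gamma> * (\<gamma> * (cnj Z - cnj W))"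
      using Fn by simp
    then have 1: "E * cnj \<gamma> * (cnj X - cnj Y) = (\<gamma> * cnj \<gamma>) * (cnj Z - cnj W)"
      by (simp only: mult_ac)
    have "\<gamma> * (cnj E * (cnj X - cnj Y)) = \<gamma> * (cnj \<gamma> * (cnj Z - cnj W))"
      using cF1 by simp
    then have 2: "cnj E * \<gamma> * (cnj X - cnj Y) = (\<gamma> * cnj \<gamma>) * (cnj Z - cnj W)"
      by (simp only: mult_ac)
    show ?thesis by (rule trans[OF 1 2[symmetric]])
  qed
  then have "E * cnj \<gamma> = cnj E * \<gamma>" by (rule mult_right_cancel[THEN iffD1, OF D0])
  then have "(E * \<gamma>) * (E * cnj \<gamma>) = (E * \<gamma>) * (cnj E * \<gamma>)" by simp
  then have "E * E * (\<gamma> * cnj \<gamma>) = \<gamma> * \<gamma> * (E * cnj E)"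
    by (simp only: mult_ac)
  then have "E * E = \<gamma> * \<gamma>" using Eu gu by simp
  then have "(E - \<gamma>) * (E + \<gamma>) = 0" by (simp add: algebra_simps)
  then have "E - \<gamma> = 0 \<or> E + \<gamma> = 0" by simp
  then have Eg: "E = \<gamma> \<or> E = - \<gamma>" by (auto simp: eq_neg_iff_add_eq_0)
  have g0: "\<gamma> \<noteq> 0" using g by auto
  obtain \<sigma> :: complex where sig: "\<sigma> = 1 \<or> \<sigma> = -1" and
    rel: "\<And>k. Z ^ k - W ^ k = \<sigma> * (-1) ^ k * (X ^ k - Y ^ k)" and neg: "(-1::complex) ^ n = 1"
  proof (cases "E = \<gamma>")
    case True
    then have "X - Y = Z - W" using F1 g0 by simp
    then have "X + W = Z + Y" by (simp add: algebra_simps)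
    then have u: "(X = Z \<and> W = Y) \<or> (X = Y \<and> W = Z) \<or> (W = - X \<and> Y = - Z)"
      by (rule unit_sum[OF norms(1) norms(4) norms(3) norms(2)])
    have ZW: "Z = - Y" "W = - X" using u XY not1 by auto
    have r: "Z ^ k - W ^ k = (-1) * (-1) ^ k * (X ^ k - Y ^ k)" for k
      unfolding ZW power_minus[of Y k] power_minus[of X k] by (simp add: algebra_simps)
    have "(-1::complex) ^ n = 1" using pows(3) unfolding ZW power_minus[of Y n] pows(2) by simp
    then show ?thesis using that[of "-1"] r by blast
  next
    case False
    then have "E = - \<gamma>" using Eg by simp
    then have "\<gamma> * (X - Y) = \<gamma> * (W - Z)" using F1 by (simp add: algebra_simps)
    then have "X - Y = W - Z" using g0 by simp
    then have "X + Z = W + Y" by (simp add: algebra_simps)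
    then have u: "(X = W \<and> Z = Y) \<or> (X = Y \<and> Z = W) \<or> (Z = - X \<and> Y = - W)"
      by (rule unit_sum[OF norms(1) norms(3) norms(4) norms(2)])
    have ZW: "Z = - X" "W = - Y" using u XY not2 by auto
    have r: "Z ^ k - W ^ k = 1 * (-1) ^ k * (X ^ k - Y ^ k)" for k
      unfolding ZW power_minus[of Y k] power_minus[of X k] by (simp add: algebra_simps)
    have "(-1::complex) ^ n = 1" using pows(3) unfolding ZW power_minus[of X n] pows(1) by simp
    then show ?thesis using that[of 1] r by blast
  qed
  have evn: "even n"
  proof (rule ccontr)
    assume "odd n"
    then have "(-1::complex) ^ n = -1" by simp
    then show False using neg by simp
  qed
  have n6: "6 \<le> n" using evn n3 n4 by presburger
  have zmod: "\<And>j. \<zeta> ^ (j mod n) = \<zeta> ^ j" using root_mod[OF n0] by (simp add: \<zeta>_def)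
  have zk: "\<zeta> ^ k \<noteq> 1" if "1 \<le> k" "k < n" for k
    using inj[of k 0] that n0 by auto
  have XYk: "X ^ k \<noteq> Y ^ k" if k: "1 \<le> k" "k < n" for k
  proof -
    have edge_pow: "x < n \<Longrightarrow> y < n \<Longrightarrow> cycle_adj n x y \<Longrightarrow> (\<zeta> ^ x) ^ k \<noteq> (\<zeta> ^ y) ^ k" for x y
    proof -
      assume xy: "x < n" "y < n" "cycle_adj n x y"
      then have "\<zeta> ^ y = \<zeta> ^ x * \<zeta> \<or> \<zeta> ^ x = \<zeta> ^ y * \<zeta>"
      proof -
        have "y = Suc x mod n \<or> x = Suc y mod n" using xy(3) by (simp add: cycle_adj_def)
        moreover have "\<zeta> ^ (Suc x mod n) = \<zeta> ^ x * \<zeta>" "\<zeta> ^ (Suc y mod n) = \<zeta> ^ y * \<zeta>"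
          by (simp_all only: zmod power_Suc2)
        ultimately show ?thesis by (elim disjE) simp_all
      qed
      moreover have nx0: "(\<zeta> ^ x) ^ k \<noteq> 0" "(\<zeta> ^ y) ^ k \<noteq> 0" using nz by (auto simp: power_eq_0_iff)
      moreover have "\<zeta> ^ k \<noteq> 1" by (rule zk[OF k])
      moreover have "\<And>p. p \<noteq> 0 \<Longrightarrow> p * \<zeta> ^ k \<noteq> p" using \<open>\<zeta> ^ k \<noteq> 1\<close> by simp
      ultimately show ?thesis by (elim disjE) (simp_all only: power_mult_distrib, metis, metis)
    qed
    show ?thesis
    proof (cases "cycle_adj n a b")
      case True then show ?thesis using edge_pow abcd by (simp add: X_def Y_def)
    next
      case False
      then have "Z ^ k \<noteq> W ^ k" using edge edge_pow abcd by (simp add: Z_def W_def)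
      then show ?thesis using rel[of k] by auto
    qed
  qed
  have h: "cis (t * th n k) = (\<gamma> * \<sigma>) * (-1) ^ k" if "1 \<le> k" "k < n" for k
  proof -
    have "cis (t * th n k) * (X ^ k - Y ^ k) = ((\<gamma> * \<sigma>) * (-1) ^ k) * (X ^ k - Y ^ k)"
      using F'[of k] rel[of k] by (simp add: mult_ac)
    then show ?thesis using XYk[OF that] by simp
  qed
  show False by (rule nt[OF evn n6 h])
qed



lemma four_cases: "(i::nat) < 4 \<Longrightarrow> i = 0 \<or> i = 1 \<or> i = 2 \<or> i = 3" by auto

lemma C4_pst: "pair_pst 4 0 1 2 3"
proof -
  define t :: real where "t = pi / 2"
  define p :: "nat \<Rightarrow> complex" where "p = (\<lambda>j. (-1) ^ j / 2)"
  define q :: "nat \<Rightarrow> complex" where "q = (\<lambda>j. if j = 0 \<or> j = 3 then 1 / 2 else - 1 / 2)"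
  have B0: "\<bar>t\<bar> * (real 4 + 1) \<ge> 0" by simp
  have evp: "mat_vec 4 (Amat 4 t) p i = (\<i> * of_real (t * 4)) * p i" if "i < 4" for i
  proof -
    have "mat_vec 4 (cycle_laplacian 4) p i = 4 * p i"
      using lap_vec[of 4 i p] that four_cases[OF that] by (auto simp: p_def nx_def pv_def)
    then show ?thesis by (simp add: mat_vec_Amat)
  qed
  have evq: "mat_vec 4 (Amat 4 t) q i = (\<i> * of_real (t * 2)) * q i" if "i < 4" for i
  proof -
    have "mat_vec 4 (cycle_laplacian 4) q i = 2 * q i"
      using lap_vec[of 4 i q] that four_cases[OF that] by (auto simp: q_def nx_def pv_def)
    then show ?thesis by (simp add: mat_vec_Amat)
  qed
  have e4: "exp (\<i> * of_real (t * 4)) = 1"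
    using cis_conv_exp[of "t * 4", symmetric] by (simp add: t_def)
  have e2: "exp (\<i> * of_real (t * 2)) = -1"
    using cis_conv_exp[of "t * 2", symmetric] by (simp add: t_def)
  have "mat_vec 4 (cycle_U 4 t) (\<lambda>v. std_basis 0 v - std_basis 1 v) i = 1 * (std_basis 2 i - std_basis 3 i)"
    if i: "i < 4" for i
  proof -
    have "mat_vec 4 (cycle_U 4 t) (\<lambda>v. std_basis 0 v - std_basis 1 v) i
        = mat_vec 4 (cycle_U 4 t) p i + mat_vec 4 (cycle_U 4 t) q i"
    proof -
      have "mat_vec 4 (cycle_U 4 t) (\<lambda>v. std_basis 0 v - std_basis 1 v) i = mat_vec 4 (cycle_U 4 t) (\<lambda>j. p j + q j) i"
        unfolding mat_vec_def
        by (intro sum.cong refl) (auto dest!: four_cases simp: p_def q_def std_basis_def)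
      also have "\<dots> = mat_vec 4 (cycle_U 4 t) p i + mat_vec 4 (cycle_U 4 t) q i"
        by (simp add: mat_vec_def distrib_left sum.distrib)
      finally show ?thesis .
    qed
    also have "\<dots> = p i - q i"
      unfolding cycle_U_Amat
      using vector_eigen[OF Amat_bound B0 evp i] vector_eigen[OF Amat_bound B0 evq i] e4 e2 by simp
    also have "\<dots> = 1 * (std_basis 2 i - std_basis 3 i)"
      using four_cases[OF i] by (auto simp: p_def q_def std_basis_def)
    finally show ?thesis .
  qed
  then show ?thesis unfolding pair_pst_def
    by (intro exI[of _ t] exI[of _ 1]) (simp add: t_def)
qed

theorem mainTheorem5:
  fixes n :: nat
  assumes "n \<ge> 3"
  shows "(\<exists>a b c d. a < n \<and> b < n \<and> c < n \<and> d < n \<and> a \<noteq> b \<and> c \<noteq> d \<and>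
            {a, b} \<noteq> {c, d} \<and> (cycle_adj n a b \<or> cycle_adj n c d) \<and> pair_pst n a b c d)
         \<longleftrightarrow> n = 4"
proof
  assume "\<exists>a b c d. a < n \<and> b < n \<and> c < n \<and> d < n \<and> a \<noteq> b \<and> c \<noteq> d \<and>
            {a, b} \<noteq> {c, d} \<and> (cycle_adj n a b \<or> cycle_adj n c d) \<and> pair_pst n a b c d"
  then obtain a b c d where h: "a < n" "b < n" "c < n" "d < n" "a \<noteq> b"
    "{a, b} \<noteq> {c, d}" "cycle_adj n a b \<or> cycle_adj n c d" "pair_pst n a b c d" by blast
  show "n = 4"
  proof (rule ccontr)
    assume n4: "n \<noteq> 4"
    obtain t \<gamma> where g: "norm \<gamma> = 1" and F: "\<forall>k. cis (t * th n k) * ((cis (2 * pi / real n) ^ a) ^ k - (cis (2 * pi / real n) ^ b) ^ k)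
        = \<gamma> * ((cis (2 * pi / real n) ^ c) ^ k - (cis (2 * pi / real n) ^ d) ^ k)"
      using pst_fourier[OF assms h(1-4) h(8)] by blast
    show False by (rule core[OF assms n4 h(1-7) g]) (use F in blast)
  qed
next
  assume n: "n = 4"
  show "\<exists>a b c d. a < n \<and> b < n \<and> c < n \<and> d < n \<and> a \<noteq> b \<and> c \<noteq> d \<and>
            {a, b} \<noteq> {c, d} \<and> (cycle_adj n a b \<or> cycle_adj n c d) \<and> pair_pst n a b c d"
    unfolding n
    by (rule exI[of _ 0], rule exI[of _ 1], rule exI[of _ 2], rule exI[of _ 3])
       (use C4_pst in \<open>simp add: cycle_adj_def doubleton_eq_iff\<close>)
qed

end
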